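(* Let $T>0$ and let $a\in C[0,1]$ with $a>0$ on $(0,1]$, $a(0)=0$ and $x\mapsto x/a(x)$ integrable, so that $p(x)=\int_0^x\frac{y}{a(y)}e^{y^2}dy$ is bounded on $[0,1]$ with $\|p\|_{L^\infty(0,1)}>0$. Let $\sigma\in C^2([0,1])$ with $\sigma>0$ in $(0,1)$, $\sigma(0)=\sigma(1)=0$, and choose $\beta=4$, $\rho>\frac{\ln 2}{\|\sigma\|_\infty}$, and $$\lambda\in\Big[\frac{e^{2\rho\|\sigma\|_\infty}-1}{(\beta-1)\|p\|_{L^\infty(0,1)}},\ \frac{2(e^{2\rho\|\sigma\|_\infty}-e^{\rho\|\sigma\|_\infty})}{(\beta-1)\|p\|_{L^\infty(0,1)}}\Big).$$ Let $T^*=(1+\varepsilon)\frac T2$ with $\varepsilon\in\big(0,\sqrt{1-\tfrac{2\sqrt2}{3}}\big)$. Then $$2\big(\hat\phi(0)-\check\phi(T^* )+\hat\Phi(0)\big)<0.$$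
   Context: $\theta(t)=\frac{1}{[t(T-t)]^2}$; $\nu(t)=\theta(T/2)$ on $[0,T/2]$, $\nu(t)=\theta(t)$ on $[T/2,T]$; $\psi(x)=\lambda(p(x)-\beta\|p\|_{L^\infty(0,1)})$; $\Psi(x)=e^{\rho\sigma(x)}-e^{2\rho\|\sigma\|_\infty}$; $\tilde\phi(t,x)=\nu(t)\psi(x)$, $\tilde\Phi(t,x)=\nu(t)\Psi(x)$; $\hat\phi(t)=\max_{x\in[0,1]}\tilde\phi(t,x)$, $\check\phi(t)=\min_{x\in[0,1]}\tilde\phi(t,x)$, $\hat\Phi(t)=\max_{x\in[0,1]}\tilde\Phi(t,x)$. *)

theory Defs
  imports "HOL-Analysis.Analysis"
begin

definition C2_on :: "real set \<Rightarrow> (real \<Rightarrow> real) \<Rightarrow> bool" where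
  "C2_on S f \<longleftrightarrow> (\<exists>f' f''. (\<forall>x\<in>S. (f has_real_derivative f' x) (at x within S)
      \<and> (f' has_real_derivative f'' x) (at x within S)) \<and> continuous_on S f'')"

definition supnorm01 :: "(real \<Rightarrow> real) \<Rightarrow> real" where
  "supnorm01 f = (SUP x\<in>{0..1}. \<bar>f x\<bar>)"

definition pfun :: "(real \<Rightarrow> real) \<Rightarrow> real \<Rightarrow> real" where
  "pfun a x = integral {0..x} (\<lambda>y. y / a y * exp (y^2))"

definition theta :: "real \<Rightarrow> real \<Rightarrow> real" where
  "theta T t = 1 / (t * (T - t))^2"

definition nu :: "real \<Rightarrow> real \<Rightarrow> real" where
  "nu T t = (if t \<le> T/2 then theta T (T/2) else theta T t)"

definition psi :: "(real \<Rightarrow> real) \<Rightarrow> real \<Rightarrow> real \<Rightarrow> real \<Rightarrow> real" where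
  "psi a lam \<beta> x = lam * (pfun a x - \<beta> * supnorm01 (pfun a))"

definition Psi :: "(real \<Rightarrow> real) \<Rightarrow> real \<Rightarrow> real \<Rightarrow> real" where
  "Psi \<sigma> \<rho> x = exp (\<rho> * \<sigma> x) - exp (2 * \<rho> * supnorm01 \<sigma>)"

definition phi_hat :: "real \<Rightarrow> (real \<Rightarrow> real) \<Rightarrow> real \<Rightarrow> real \<Rightarrow> real \<Rightarrow> real" where
  "phi_hat T a lam \<beta> t = (SUP x\<in>{0..1}. nu T t * psi a lam \<beta> x)"

definition phi_check :: "real \<Rightarrow> (real \<Rightarrow> real) \<Rightarrow> real \<Rightarrow> real \<Rightarrow> real \<Rightarrow> real" where
  "phi_check T a lam \<beta> t = (INF x\<in>{0..1}. nu T t * psi a lam \<beta> x)"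

definition Phi_hat :: "real \<Rightarrow> (real \<Rightarrow> real) \<Rightarrow> real \<Rightarrow> real \<Rightarrow> real" where
  "Phi_hat T \<sigma> \<rho> t = (SUP x\<in>{0..1}. nu T t * Psi \<sigma> \<rho> x)"

end

theory Submission
  imports Defs
begin

lemma p_facts:
  fixes a :: "real \<Rightarrow> real"
  assumes pos: "\<forall>x\<in>{0<..1}. a x > 0"
    and int: "(\<lambda>x. x / a x) integrable_on {0..1}"
  shows "\<And>x. x \<in> {0..1} \<Longrightarrow> 0 \<le> pfun a x \<and> pfun a x \<le> pfun a 1"
proof -
  define f where "f = (\<lambda>y::real. y / a y * exp (y^2))"
  have fnn: "\<And>y. y \<in> {0..1} \<Longrightarrow> 0 \<le> f y"
  proof -
    fix y :: real assume y: "y \<in> {0..1}"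
    show "0 \<le> f y"
    proof (cases "y = 0")
      case True then show ?thesis by (simp add: f_def)
    next
      case False
      with y pos have "a y > 0" by auto
      with y show ?thesis by (simp add: f_def)
    qed
  qed
  have gnn: "\<And>y. y \<in> {0..1} \<Longrightarrow> 0 \<le> y / a (y::real)"
  proof -
    fix y :: real assume y: "y \<in> {0..1}"
    show "0 \<le> y / a y"
    proof (cases "y = 0")
      case True then show ?thesis by simp
    next
      case False
      with y pos have "a y > 0" by auto
      with y show ?thesis by simp
    qed
  qed
  have abs: "(\<lambda>x. x / a x) absolutely_integrable_on {0..1::real}"
    using nonnegative_absolutely_integrable_1[OF int] gnn by blast
  have cont: "continuous_on {0..1::real} (\<lambda>y. exp (y^2))"
    by (intro continuous_intros)
  have bd: "bounded ((\<lambda>y. exp (y^2)) ` {0..1::real})"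
    by (intro compact_imp_bounded compact_continuous_image cont) simp
  have "(\<lambda>x. exp (x^2) * (x / a x)) absolutely_integrable_on {0..1::real}"
    by (rule absolutely_integrable_bounded_measurable_product_real[OF
          continuous_imp_measurable_on_sets_lebesgue[OF cont] _ bd abs]) auto
  hence fint: "f integrable_on {0..1}"
    unfolding f_def by (simp add: mult.commute absolutely_integrable_on_def)
  fix x :: real assume x: "x \<in> {0..1}"
  have fx: "f integrable_on {0..x}"
    by (rule integrable_on_subinterval[OF fint]) (use x in auto)
  have "0 \<le> integral {0..x} f"
    by (rule integral_nonneg[OF fx]) (use x fnn in auto)
  moreover have "integral {0..x} f \<le> integral {0..1} f"
    by (rule integral_subset_le[OF _ fx fint]) (use x fnn in auto)
  ultimately show "0 \<le> pfun a x \<and> pfun a x \<le> pfun a 1"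
    unfolding pfun_def f_def by simp
qed

theorem mainTheorem8:
  fixes T \<beta> \<rho> lam \<epsilon> Tstar :: real and a \<sigma> :: "real \<Rightarrow> real"
  assumes "T > 0"
    and "continuous_on {0..1} a" and "\<forall>x\<in>{0<..1}. a x > 0" and "a 0 = 0"
    and "(\<lambda>x. x / a x) integrable_on {0..1}"
    and "C2_on {0..1} \<sigma>" and "\<forall>x\<in>{0<..<1}. \<sigma> x > 0" and "\<sigma> 0 = 0" and "\<sigma> 1 = 0"
    and "\<beta> = 4"
    and "\<rho> > ln 2 / supnorm01 \<sigma>"
    and "(exp (2 * \<rho> * supnorm01 \<sigma>) - 1) / ((\<beta> - 1) * supnorm01 (pfun a)) \<le> lam"
    and "lam < 2 * (exp (2 * \<rho> * supnorm01 \<sigma>) - exp (\<rho> * supnorm01 \<sigma>)) / ((\<beta> - 1) * supnorm01 (pfun a))"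
    and "0 < \<epsilon>" and "\<epsilon> < sqrt (1 - 2 * sqrt 2 / 3)"
    and "Tstar = (1 + \<epsilon>) * T / 2"
  shows "2 * (phi_hat T a lam \<beta> 0 - phi_check T a lam \<beta> Tstar + Phi_hat T \<sigma> \<rho> 0) < 0"
proof -
  note pf = p_facts[OF assms(3) assms(5)]
  define P where "P = supnorm01 (pfun a)"
  define S where "S = supnorm01 \<sigma>"
  have bddp: "bdd_above ((\<lambda>x. \<bar>pfun a x\<bar>) ` {0..1})"
    using pf by (intro bdd_aboveI2[where M="pfun a 1"]) force
  have pleP: "\<And>x. x \<in> {0..1} \<Longrightarrow> pfun a x \<le> P"
  proof -
    fix x :: real assume x: "x \<in> {0..1}"
    have "\<bar>pfun a x\<bar> \<le> P" unfolding P_def supnorm01_def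
      by (rule cSUP_upper[OF x bddp])
    thus "pfun a x \<le> P" by simp
  qed
  have P0: "0 \<le> P" using pleP[of 0] pf[of 0] by simp
  obtain s' s'' where "\<forall>x\<in>{0..1}. (\<sigma> has_real_derivative s' x) (at x within {0..1})"
    using assms(6) unfolding C2_on_def by blast
  hence contS: "continuous_on {0..1} \<sigma>" by (intro DERIV_continuous_on) auto
  have "bounded ((\<lambda>x. \<bar>\<sigma> x\<bar>) ` {0..1::real})"
    by (intro compact_imp_bounded compact_continuous_image continuous_intros contS) simp
  hence bdds: "bdd_above ((\<lambda>x. \<bar>\<sigma> x\<bar>) ` {0..1})" by (rule bounded_imp_bdd_above)
  have sleS: "\<And>x. x \<in> {0..1} \<Longrightarrow> \<sigma> x \<le> S"
  proof -
    fix x :: real assume x: "x \<in> {0..1}"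
    have "\<bar>\<sigma> x\<bar> \<le> S" unfolding S_def supnorm01_def
      by (rule cSUP_upper[OF x bdds])
    thus "\<sigma> x \<le> S" by simp
  qed
  have "\<sigma> (1/2) > 0" using assms(7) by auto
  hence S0: "S > 0" using sleS[of "1/2"] by simp
  have "ln 2 / S > 0" using S0 by simp
  hence rho0: "\<rho> > 0" using assms(11) unfolding S_def by linarith
  define E1 where "E1 = exp (\<rho> * S)"
  define E2 where "E2 = exp (2 * \<rho> * S)"
  have E1g: "E1 > 1" unfolding E1_def using rho0 S0 by simp
  have E2: "E2 = E1 * E1" unfolding E1_def E2_def by (simp add: exp_add[symmetric])
  have E21: "E2 - E1 > 0" using E1g E2 by (smt (verit) mult_less_cancel_left1)
  have lo: "(E2 - 1) / (3 * P) \<le> lam" using assms(12) assms(10) unfolding E2_def P_def S_def by simp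
  have hi: "lam < 2 * (E2 - E1) / (3 * P)" using assms(13) assms(10) unfolding E1_def E2_def P_def S_def by simp
  have Ppos: "P > 0"
  proof (rule ccontr)
    assume "\<not> P > 0" hence "P = 0" using P0 by simp
    with lo hi show False by simp
  qed
  have lam0: "lam \<ge> 0"
  proof -
    have "0 \<le> (E2 - 1) / (3 * P)" using E2 E1g Ppos
      by (intro divide_nonneg_pos) (auto, metis E21 E1g less_trans less_eq_real_def diff_gt_0_iff_gt)
    thus ?thesis using lo by linarith
  qed
  have lamP: "lam * P < 2 * (E2 - E1) / 3"
    using hi Ppos by (simp add: field_simps)
  define c0 where "c0 = 16 / T^4"
  have c0: "c0 > 0" unfolding c0_def using assms(1) by simp
  have nu0: "nu T 0 = c0" unfolding nu_def theta_def c0_def using assms(1)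
    by (simp add: field_simps power2_eq_square power4_eq_xxxx)
  define q where "q = 1 - \<epsilon>^2"
  have e2: "\<epsilon>^2 < 1 - 2 * sqrt 2 / 3"
  proof -
    have "0 < 1 - 2 * sqrt 2 / 3"
    proof -
      have "sqrt 2 < 3/2" by (rule real_less_lsqrt) (auto simp: power2_eq_square)
      thus ?thesis by simp
    qed
    hence "(sqrt (1 - 2 * sqrt 2 / 3))^2 = 1 - 2 * sqrt 2 / 3" by simp
    moreover have "\<epsilon>^2 < (sqrt (1 - 2 * sqrt 2 / 3))^2"
      using assms(14,15) by (intro power_strict_mono) auto
    ultimately show ?thesis by simp
  qed
  have qlo: "q > 2 * sqrt 2 / 3" unfolding q_def using e2 by simp
  have qpos: "q > 0" using qlo real_sqrt_ge_zero[of 2] by linarith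
  have q1: "q \<le> 1" unfolding q_def by simp
  have qq: "q * q > 8/9"
  proof -
    have "(2 * sqrt 2 / 3) * (2 * sqrt 2 / 3) < q * q"
      using qlo qpos by (intro mult_strict_mono) auto
    moreover have "(2 * sqrt 2 / 3) * (2 * sqrt 2 / 3) = 8/9" by simp
    ultimately show ?thesis by simp
  qed
  define k where "k = 1 / (q * q)"
  have qq1: "q * q \<le> 1" using qpos q1 by (intro mult_le_one) auto
  have k1: "k \<ge> 1" unfolding k_def using qq1 qpos by (simp add: le_divide_eq_1)
  have k98: "k \<le> 9/8" unfolding k_def using qq qpos by (simp add: field_simps)
  have eps1: "\<epsilon> < 1"
  proof (rule ccontr)
    assume "\<not> \<epsilon> < 1" hence "1 \<le> \<epsilon>^2" by (simp add: one_le_power)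
    with e2 real_sqrt_ge_zero[of 2] show False by linarith
  qed
  have "T * \<epsilon> < T" using assms(1) eps1 by simp
  moreover have "T * \<epsilon> > 0" using assms(1,14) by simp
  moreover have "Tstar * 2 = T + T * \<epsilon>" using assms(16) by (simp add: field_simps)
  ultimately have Ts: "Tstar > T/2" "Tstar < T" by linarith+
  have nuS: "nu T Tstar = c0 * k"
  proof -
    have "nu T Tstar = 1 / (Tstar * (T - Tstar))^2" using Ts unfolding nu_def theta_def by simp
    also have "Tstar * (T - Tstar) = T^2 * q / 4" unfolding q_def assms(16)
      by (simp add: field_simps power2_eq_square)
    finally show ?thesis unfolding c0_def k_def using assms(1) qpos
      by (simp add: field_simps power2_eq_square power4_eq_xxxx)
  qed
  have psi_eq: "\<And>x. psi a lam \<beta> x = lam * (pfun a x - 4 * P)"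
    unfolding psi_def P_def assms(10) by simp
  have h1: "phi_hat T a lam \<beta> 0 \<le> c0 * (lam * (P - 4 * P))"
    unfolding phi_hat_def nu0
  proof (rule cSUP_least)
    fix x :: real assume x: "x \<in> {0..1}"
    show "c0 * psi a lam \<beta> x \<le> c0 * (lam * (P - 4 * P))"
      unfolding psi_eq using pleP[OF x] lam0 c0
      by (intro mult_left_mono) auto
  qed simp
  have h2: "c0 * k * (lam * (0 - 4 * P)) \<le> phi_check T a lam \<beta> Tstar"
    unfolding phi_check_def nuS
  proof (rule cINF_greatest)
    fix x :: real assume x: "x \<in> {0..1}"
    show "c0 * k * (lam * (0 - 4 * P)) \<le> c0 * k * psi a lam \<beta> x"
      unfolding psi_eq using pf[OF x] lam0 c0 k1
      by (intro mult_left_mono) auto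
  qed simp
  have h3: "Phi_hat T \<sigma> \<rho> 0 \<le> c0 * (E1 - E2)"
    unfolding Phi_hat_def nu0
  proof (rule cSUP_least)
    fix x :: real assume x: "x \<in> {0..1}"
    have "exp (\<rho> * \<sigma> x) \<le> E1" unfolding E1_def using sleS[OF x] rho0 by simp
    thus "c0 * Psi \<sigma> \<rho> x \<le> c0 * (E1 - E2)"
      unfolding Psi_def E2_def[symmetric] S_def[symmetric] using c0
      by (intro mult_left_mono) auto
  qed simp
  have "lam * P * (4 * k - 3) \<le> lam * P * (3/2)"
    using lam0 P0 k98 by (intro mult_left_mono) auto
  also have "\<dots> < E2 - E1" using lamP by simp
  finally have key: "lam * P * (4 * k - 3) < E2 - E1" .
  have "phi_hat T a lam \<beta> 0 - phi_check T a lam \<beta> Tstar + Phi_hat T \<sigma> \<rho> 0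
        \<le> c0 * (lam * (P - 4 * P)) - c0 * k * (lam * (0 - 4 * P)) + c0 * (E1 - E2)"
    using h1 h2 h3 by linarith
  also have "\<dots> = c0 * (lam * P * (4 * k - 3) - (E2 - E1))" by (simp add: algebra_simps)
  also have "\<dots> < 0" using c0 key by (simp add: mult_pos_neg)
  finally show ?thesis by simp
qed

end
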